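(* Let $p\in(1,\infty)$, $\lambda>0$, and let $E$ be a Banach space with a normalized $1$-unconditional basis $(e_n)_{n\in\mathbb N}$ which is $p$-convex with convexity constant $1$. For every $n\in\mathbb N$ and every finite sequence $(X_j)_{j=1}^n$ of Banach spaces each having property $\lambda$-HIC$_{p,d}$, the space $\left(\sum_{j=1}^n X_j\right)_E$ has property $(\lambda+\varepsilon)$-HIC$_{p,d}$ for each $\varepsilon>0$.
   Context: For infinite $\mathbb M\subseteq\mathbb N$ and $k\in\mathbb N$, $[\mathbb M]^k$ is the set of $\bar n=(n_1,\dots,n_k)\in\mathbb M^k$ with $n_1<\dots<n_k$, with Hamming distance $d_{\mathbb H}(\bar n,\bar m)=|\{j:n_j\ne m_j\}|$; $[\mathbb M]^\omega$ is the set of infinite subsets of $\mathbb M$; $I_k(\mathbb M)=\{(\bar n,\bar m): n_1<m_1<\dots<n_k<m_k\}$; $H_j(\mathbb M)=\{(\bar n,\bar m)\in([\mathbb M]^k)^2: n_i=m_i\ (i\ne j),\ n_j<m_j\}$. A metric space $(M,d)$ has $\lambda$-HIC$_{p,d}$ if for every $k$ and every Lipschitz $f:([\mathbb N]^k,d_{\mathbb H})\to M$ there is $\mathbb M\in[\mathbb N]^\omega$ with $d(f(\bar n),f(\bar m))\le\lambda(\sum_{j=1}^k\alpha_j^p)^{1/p}$ for all $(\bar n,\bar m)\in I_k(\mathbb M)$, where $\alpha_j=\sup_{(\bar n,\bar m)\in H_j(\mathbb N)}d(f(\bar n),f(\bar m))$. The finite sum $\left(\sum_{j=1}^n X_j\right)_E$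 is $X_1\times\dots\times X_n$ with norm $\|(x_1,\dots,x_n)\|=\|\sum_{j=1}^n\|x_j\|e_j\|_E$. The basis is $p$-convex with convexity constant $1$ if $\|\sum_j(|x^1_j|^p+\dots+|x^k_j|^p)^{1/p}e_j\|^p\le\sum_{m=1}^k\|x^m\|^p$ for all $k$ and all $x^m=\sum_jx^m_je_j\in E$. *)

theory Defs
  imports "HOL-Analysis.Analysis"
begin

definition has_coeffs :: "(nat \<Rightarrow> 'e::real_normed_vector) \<Rightarrow> 'e \<Rightarrow> (nat \<Rightarrow> real) \<Rightarrow> bool" where
  "has_coeffs e x a \<longleftrightarrow> (\<lambda>N. \<Sum>j<N. a j *\<^sub>R e j) \<longlonglongrightarrow> x"

definition schauder_basis :: "(nat \<Rightarrow> 'e::real_normed_vector) \<Rightarrow> bool" where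
  "schauder_basis e \<longleftrightarrow> (\<forall>x. \<exists>!a. has_coeffs e x a)"

definition normalized_basis :: "(nat \<Rightarrow> 'e::real_normed_vector) \<Rightarrow> bool" where
  "normalized_basis e \<longleftrightarrow> (\<forall>j. norm (e j) = 1)"

definition one_unconditional :: "(nat \<Rightarrow> 'e::real_normed_vector) \<Rightarrow> bool" where
  "one_unconditional e \<longleftrightarrow>
     (\<forall>N a s. (\<forall>j. s j = 1 \<or> s j = -1) \<longrightarrow>
        norm (\<Sum>j<N. (s j * a j) *\<^sub>R e j) = norm (\<Sum>j<N. a j *\<^sub>R e j))"

definition p_convex_one :: "real \<Rightarrow> (nat \<Rightarrow> 'e::real_normed_vector) \<Rightarrow> bool" where
  "p_convex_one p e \<longleftrightarrow>
     (\<forall>k (x :: nat \<Rightarrow> 'e) (a :: nat \<Rightarrow> nat \<Rightarrow> real) y.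
        (\<forall>m<k. has_coeffs e (x m) (a m)) \<longrightarrow>
        has_coeffs e y (\<lambda>j. (\<Sum>m<k. \<bar>a m j\<bar> powr p) powr (1/p)) \<longrightarrow>
        norm y powr p \<le> (\<Sum>m<k. norm (x m) powr p))"

text \<open>[M]^k as strictly increasing lists of length k with entries in M\<close>
definition incr_tuples :: "nat \<Rightarrow> nat set \<Rightarrow> nat list set" where
  "incr_tuples k M = {ns. length ns = k \<and> sorted_wrt (<) ns \<and> set ns \<subseteq> M}"

definition hamming :: "nat list \<Rightarrow> nat list \<Rightarrow> nat" where
  "hamming ns ms = card {j. j < length ns \<and> ns ! j \<noteq> ms ! j}"

definition I_pairs :: "nat \<Rightarrow> nat set \<Rightarrow> (nat list \<times> nat list) set" where
  "I_pairs k M = {(ns, ms). ns \<in> incr_tuples k M \<and> ms \<in> incr_tuples k M \<and>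
      (\<forall>i<k. ns ! i < ms ! i) \<and> (\<forall>i. Suc i < k \<longrightarrow> ms ! i < ns ! Suc i)}"

definition H_pairs :: "nat \<Rightarrow> nat \<Rightarrow> nat set \<Rightarrow> (nat list \<times> nat list) set" where
  "H_pairs k j M = {(ns, ms). ns \<in> incr_tuples k M \<and> ms \<in> incr_tuples k M \<and>
      (\<forall>i<k. i \<noteq> j \<longrightarrow> ns ! i = ms ! i) \<and> ns ! j < ms ! j}"

definition lipschitz_hamming :: "nat \<Rightarrow> ('m \<Rightarrow> 'm \<Rightarrow> real) \<Rightarrow> (nat list \<Rightarrow> 'm) \<Rightarrow> bool" where
  "lipschitz_hamming k d f \<longleftrightarrow> (\<exists>L. \<forall>ns\<in>incr_tuples k UNIV. \<forall>ms\<in>incr_tuples k UNIV.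
      d (f ns) (f ms) \<le> L * real (hamming ns ms))"

definition HIC :: "real \<Rightarrow> real \<Rightarrow> 'm set \<Rightarrow> ('m \<Rightarrow> 'm \<Rightarrow> real) \<Rightarrow> bool" where
  "HIC lam p M d \<longleftrightarrow>
     (\<forall>k (f :: nat list \<Rightarrow> 'm).
        f ` incr_tuples k UNIV \<subseteq> M \<and> lipschitz_hamming k d f \<longrightarrow>
        (\<exists>N. infinite N \<and>
           (\<forall>(ns, ms)\<in>I_pairs k N.
              d (f ns) (f ms) \<le> lam *
                (\<Sum>j<k. (Sup {d (f ns') (f ms') | ns' ms'. (ns', ms') \<in> H_pairs k j UNIV}) powr p)
                  powr (1/p))))"

definition sum_space :: "nat \<Rightarrow> (nat \<Rightarrow> 'a::real_normed_vector set) \<Rightarrow> (nat \<Rightarrow> 'a) set" where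
  "sum_space n X = {x. (\<forall>j<n. x j \<in> X j) \<and> (\<forall>j\<ge>n. x j = 0)}"

definition sum_norm :: "(nat \<Rightarrow> 'e::real_normed_vector) \<Rightarrow> nat \<Rightarrow> (nat \<Rightarrow> 'a::real_normed_vector) \<Rightarrow> real" where
  "sum_norm e n x = norm (\<Sum>j<n. norm (x j) *\<^sub>R e j)"

definition sum_dist :: "(nat \<Rightarrow> 'e::real_normed_vector) \<Rightarrow> nat \<Rightarrow> (nat \<Rightarrow> 'a::real_normed_vector) \<Rightarrow> (nat \<Rightarrow> 'a) \<Rightarrow> real" where
  "sum_dist e n x y = sum_norm e n (\<lambda>j. x j - y j)"

end

theory Submission
  imports Defs "HOL-Library.Ramsey"
begin


lemma conv_lemma:
  fixes w u :: "'v::real_normed_vector"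
  assumes "norm (w - u) = norm (w + u)" "\<bar>r\<bar> \<le> 1"
  shows "norm (w + r *\<^sub>R u) \<le> norm (w + u)"
proof -
  have e1: "((1+r)/2) *\<^sub>R (w + u) + ((1-r)/2) *\<^sub>R (w - u)
      = ((1+r)/2 + (1-r)/2) *\<^sub>R w + ((1+r)/2 - (1-r)/2) *\<^sub>R u"
    by (simp add: algebra_simps)
  have e2: "(1+r)/2 + (1-r)/2 = (1::real)" "(1+r)/2 - (1-r)/2 = r" by (simp_all add: field_simps)
  have eq: "w + r *\<^sub>R u = ((1+r)/2) *\<^sub>R (w + u) + ((1-r)/2) *\<^sub>R (w - u)"
    unfolding e1 e2 by simp
  have "norm (w + r *\<^sub>R u) \<le> norm (((1+r)/2) *\<^sub>R (w + u)) + norm (((1-r)/2) *\<^sub>R (w - u))"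
    unfolding eq by (rule norm_triangle_ineq)
  also have "\<dots> = ((1+r)/2) * norm (w+u) + ((1-r)/2) * norm (w - u)"
    using assms(2) by simp
  also have "\<dots> = norm (w+u)" using assms(1) by (simp add: field_simps)
  finally show ?thesis .
qed

lemma uncond_step:
  fixes e :: "nat \<Rightarrow> 'e::real_normed_vector"
  assumes unc: "one_unconditional e" and "\<bar>t\<bar> \<le> c j"
  shows "norm (\<Sum>i<n. (c(j:=t)) i *\<^sub>R e i) \<le> norm (\<Sum>i<n. c i *\<^sub>R e i)"
proof (cases "j < n")
  case False
  then have "(\<Sum>i<n. (c(j:=t)) i *\<^sub>R e i) = (\<Sum>i<n. c i *\<^sub>R e i)"
    by (intro sum.cong) auto
  then show ?thesis by simp
next
  case True
  define w where "w = (\<Sum>i\<in>{..<n}-{j}. c i *\<^sub>R e i)"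
  have jn: "j \<in> {..<n}" using True by simp
  have r1: "(\<Sum>i<n. (c(j:=t)) i *\<^sub>R e i) = (c(j:=t)) j *\<^sub>R e j + (\<Sum>i\<in>{..<n}-{j}. (c(j:=t)) i *\<^sub>R e i)"
    by (rule sum.remove[OF finite_lessThan jn])
  have r2: "(\<Sum>i\<in>{..<n}-{j}. (c(j:=t)) i *\<^sub>R e i) = w"
    unfolding w_def by (intro sum.cong) auto
  have e1: "(\<Sum>i<n. (c(j:=t)) i *\<^sub>R e i) = w + t *\<^sub>R e j"
    unfolding r1 r2 by (simp add: add.commute)
  have e2: "(\<Sum>i<n. c i *\<^sub>R e i) = w + c j *\<^sub>R e j"
    unfolding w_def using sum.remove[OF finite_lessThan jn, of "\<lambda>i. c i *\<^sub>R e i"]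
    by (simp only: add.commute)
  define s :: "nat \<Rightarrow> real" where "s = (\<lambda>i. if i = j then -1 else 1)"
  have e3: "(\<Sum>i<n. (s i * c i) *\<^sub>R e i) = w - c j *\<^sub>R e j"
  proof -
    have "(\<Sum>i<n. (s i * c i) *\<^sub>R e i) = (s j * c j) *\<^sub>R e j + (\<Sum>i\<in>{..<n}-{j}. (s i * c i) *\<^sub>R e i)"
      using sum.remove[OF finite_lessThan jn] by blast
    also have "(\<Sum>i\<in>{..<n}-{j}. (s i * c i) *\<^sub>R e i) = w"
      unfolding w_def s_def by (intro sum.cong) auto
    finally show ?thesis by (simp add: s_def)
  qed
  have sgn: "\<And>i. s i = 1 \<or> s i = -1" unfolding s_def by auto
  have "norm (\<Sum>i<n. (s i * c i) *\<^sub>R e i) = norm (\<Sum>i<n. c i *\<^sub>R e i)"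
    by (rule unc[unfolded one_unconditional_def, rule_format, where N=n and a=c and s=s, OF sgn])
  then have neq: "norm (w - c j *\<^sub>R e j) = norm (w + c j *\<^sub>R e j)"
    unfolding e2 e3 .
  show ?thesis
  proof (cases "c j = 0")
    case True
    then have t0: "t = 0" using assms(2) abs_le_zero_iff by metis
    have "c(j:=t) = c" using t0 True by auto
    then show ?thesis by simp
  next
    case False
    then have cpos: "c j > 0" using assms(2) abs_ge_zero[of t] by linarith
    have ww: "w + t *\<^sub>R e j = w + (t / c j) *\<^sub>R (c j *\<^sub>R e j)" using cpos by simp
    have "\<bar>t / c j\<bar> = \<bar>t\<bar> / c j" using cpos by (simp add: abs_divide)
    also have "\<dots> \<le> 1" using cpos assms(2) by (simp add: divide_le_eq)
    finally have "\<bar>t / c j\<bar> \<le> 1" .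
    from conv_lemma[OF neq this] have "norm (w + t *\<^sub>R e j) \<le> norm (w + c j *\<^sub>R e j)"
      unfolding ww .
    then show ?thesis unfolding e1 e2 .
  qed
qed

lemma uncond_mono:
  fixes e :: "nat \<Rightarrow> 'e::real_normed_vector"
  assumes unc: "one_unconditional e" and le: "\<And>i. i < n \<Longrightarrow> \<bar>a i\<bar> \<le> b i"
  shows "norm (\<Sum>i<n. a i *\<^sub>R e i) \<le> norm (\<Sum>i<n. b i *\<^sub>R e i)"
proof -
  define c where "c m = (\<lambda>i. if i < m then b i else a i)" for m
  have "m \<le> n \<Longrightarrow> norm (\<Sum>i<n. c 0 i *\<^sub>R e i) \<le> norm (\<Sum>i<n. c m i *\<^sub>R e i)" for m
  proof (induction m)
    case 0 then show ?case by simp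
  next
    case (Suc m)
    have "c m = (c (Suc m))(m := a m)" unfolding c_def by auto
    moreover have "\<bar>a m\<bar> \<le> c (Suc m) m" using le Suc.prems unfolding c_def by auto
    ultimately have "norm (\<Sum>i<n. c m i *\<^sub>R e i) \<le> norm (\<Sum>i<n. c (Suc m) i *\<^sub>R e i)"
      using uncond_step[OF unc] by metis
    then show ?case using Suc by simp
  qed
  moreover have "(\<Sum>i<n. c n i *\<^sub>R e i) = (\<Sum>i<n. b i *\<^sub>R e i)"
    by (intro sum.cong) (auto simp: c_def)
  moreover have "(\<Sum>i<n. c 0 i *\<^sub>R e i) = (\<Sum>i<n. a i *\<^sub>R e i)"
    by (intro sum.cong) (auto simp: c_def)
  ultimately show ?thesis by (metis order_refl)
qed

lemma coord_le:
  fixes e :: "nat \<Rightarrow> 'e::real_normed_vector"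
  assumes unc: "one_unconditional e" and nb: "normalized_basis e" and j: "j < n"
    and nn: "\<And>i. i < n \<Longrightarrow> 0 \<le> b i"
  shows "b j \<le> norm (\<Sum>i<n. b i *\<^sub>R e i)"
proof -
  have "(\<Sum>i<n. (if i = j then b j else 0) *\<^sub>R e i) = b j *\<^sub>R e j"
  proof -
    have "(\<Sum>i<n. (if i = j then b j else 0) *\<^sub>R e i) = (\<Sum>i<n. if i = j then b j *\<^sub>R e j else 0)"
      by (intro sum.cong) auto
    then show ?thesis using j by simp
  qed
  moreover have "norm (b j *\<^sub>R e j) = b j" using nb nn[OF j] unfolding normalized_basis_def by simp
  moreover have "norm (\<Sum>i<n. (if i = j then b j else 0) *\<^sub>R e i) \<le> norm (\<Sum>i<n. b i *\<^sub>R e i)"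
    by (rule uncond_mono[OF unc]) (use nn in auto)
  ultimately show ?thesis by simp
qed

lemma comp_le_sum_dist:
  fixes e :: "nat \<Rightarrow> 'e::real_normed_vector"
  assumes unc: "one_unconditional e" and nb: "normalized_basis e" and j: "j < n"
  shows "norm (x j - y j) \<le> sum_dist e n x y"
  unfolding sum_dist_def sum_norm_def
  by (rule coord_le[OF unc nb j]) simp

lemma norm_sum_e_le:
  fixes e :: "nat \<Rightarrow> 'e::real_normed_vector"
  assumes nb: "normalized_basis e"
  shows "norm (\<Sum>i<n. e i) \<le> real n"
proof -
  have "norm (\<Sum>i<n. e i) \<le> (\<Sum>i<n. norm (e i))" by (rule norm_sum)
  also have "\<dots> = real n" using nb unfolding normalized_basis_def by simp
  finally show ?thesis .
qed

lemma has_coeffs_fin: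
  assumes "\<And>j. j \<ge> n \<Longrightarrow> a j = 0"
  shows "has_coeffs e (\<Sum>j<n. a j *\<^sub>R e j) a"
  unfolding has_coeffs_def
proof (rule tendsto_eventually, rule eventually_sequentiallyI[of n])
  fix N assume "n \<le> N"
  then show "(\<Sum>j<N. a j *\<^sub>R e j) = (\<Sum>j<n. a j *\<^sub>R e j)"
    using assms by (intro sum.mono_neutral_right) auto
qed



lemma map_incr:
  assumes h: "strict_mono h" and ns: "ns \<in> incr_tuples k M"
  shows "map h ns \<in> incr_tuples k (h ` M)"
proof -
  have "sorted_wrt (<) (map h ns)"
    using ns h unfolding incr_tuples_def sorted_wrt_map
    by (auto intro: sorted_wrt_mono_rel[of _ "(<)"] simp: strict_mono_less)
  then show ?thesis using ns unfolding incr_tuples_def by auto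
qed

lemma hamming_map:
  assumes "inj h" "length ns = length ms"
  shows "hamming (map h ns) (map h ms) = hamming ns ms"
proof -
  have "{j. j < length (map h ns) \<and> map h ns ! j \<noteq> map h ms ! j} = {j. j < length ns \<and> ns ! j \<noteq> ms ! j}"
    using assms by (auto simp: inj_eq)
  then show ?thesis unfolding hamming_def by simp
qed

lemma hamming_le:
  "hamming ns ms \<le> length ns"
proof -
  have "{j. j < length ns \<and> ns ! j \<noteq> ms ! j} \<subseteq> {..<length ns}" by auto
  then show ?thesis unfolding hamming_def by (metis card_lessThan card_mono finite_lessThan)
qed

lemma H_map:
  assumes h: "strict_mono h" and P: "(ns, ms) \<in> H_pairs k i M" and ik: "i < k"
  shows "(map h ns, map h ms) \<in> H_pairs k i (h ` M)"
  using P map_incr[OF h] ik unfolding H_pairs_def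
  by (auto simp: incr_tuples_def strict_mono_less[OF h])

lemma I_mono: "N' \<subseteq> N \<Longrightarrow> I_pairs k N' \<subseteq> I_pairs k N"
  unfolding I_pairs_def incr_tuples_def by auto

lemma H_mono: "N' \<subseteq> N \<Longrightarrow> H_pairs k i N' \<subseteq> H_pairs k i N"
  unfolding H_pairs_def incr_tuples_def by auto

lemma pull_list:
  assumes h: "strict_mono h" and ns: "ns \<in> incr_tuples k (h ` N)"
  shows "map (inv h) ns \<in> incr_tuples k N \<and> map h (map (inv h) ns) = ns"
proof -
  have inj: "inj h" using h strict_mono_imp_inj_on by blast
  have sub: "set ns \<subseteq> h ` N" using ns unfolding incr_tuples_def by auto
  have eq: "map h (map (inv h) ns) = ns"
    unfolding map_map by (rule map_idI) (use sub in \<open>auto simp: f_inv_into_f\<close>)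
  have "set (map (inv h) ns) \<subseteq> N" using sub inj by auto
  moreover have "sorted_wrt (<) (map (inv h) ns)"
  proof -
    have "sorted_wrt (<) (map h (map (inv h) ns))" using eq ns unfolding incr_tuples_def by simp
    then show ?thesis unfolding sorted_wrt_map[of _ h] using strict_mono_less[OF h]
      by (auto intro: sorted_wrt_mono_rel[of _ "\<lambda>x y. h x < h y"])
  qed
  ultimately show ?thesis using eq ns unfolding incr_tuples_def by auto
qed

lemma I_pullback:
  assumes h: "strict_mono h" and P: "(ns, ms) \<in> I_pairs k (h ` N)"
  shows "(map (inv h) ns, map (inv h) ms) \<in> I_pairs k N
         \<and> map h (map (inv h) ns) = ns \<and> map h (map (inv h) ms) = ms"
proof -
  have a: "ns \<in> incr_tuples k (h ` N)" "ms \<in> incr_tuples k (h ` N)"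
    using P unfolding I_pairs_def by auto
  note pa = pull_list[OF h a(1)] and pb = pull_list[OF h a(2)]
  define ns' where "ns' = map (inv h) ns"
  define ms' where "ms' = map (inv h) ms"
  have len: "length ns' = k" "length ms' = k" using pa pb unfolding ns'_def ms'_def incr_tuples_def by auto
  have hn: "\<And>i. i < k \<Longrightarrow> h (ns' ! i) = ns ! i" using pa len unfolding ns'_def
    by (metis nth_map)
  have hm: "\<And>i. i < k \<Longrightarrow> h (ms' ! i) = ms ! i" using pb len unfolding ms'_def
    by (metis nth_map)
  have "\<forall>i<k. ns' ! i < ms' ! i"
  proof (intro allI impI)
    fix i assume "i < k"
    then have "h (ns' ! i) < h (ms' ! i)" using P hn hm unfolding I_pairs_def by auto
    then show "ns' ! i < ms' ! i" using strict_mono_less[OF h] by blast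
  qed
  moreover have "\<forall>i. Suc i < k \<longrightarrow> ms' ! i < ns' ! Suc i"
    using P hn hm strict_mono_less[OF h] unfolding I_pairs_def
    by (metis (no_types, lifting) Suc_lessD case_prodD mem_Collect_eq)
  ultimately show ?thesis using pa pb unfolding I_pairs_def ns'_def ms'_def by auto
qed

lemma H_nonempty:
  assumes "i < k"
  shows "\<exists>ns ms. (ns, ms) \<in> H_pairs k i UNIV"
proof -
  define ns where "ns = map (\<lambda>t. if t \<le> i then t else Suc t) [0..<k]"
  define ms where "ms = map (\<lambda>t. if t < i then t else Suc t) [0..<k]"
  have "sorted_wrt (<) ns" unfolding ns_def sorted_wrt_map
    by (rule sorted_wrt_mono_rel[OF _ sorted_wrt_upt]) auto
  moreover have "sorted_wrt (<) ms" unfolding ms_def sorted_wrt_map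
    by (rule sorted_wrt_mono_rel[OF _ sorted_wrt_upt]) auto
  ultimately have "(ns, ms) \<in> H_pairs k i UNIV"
    using assms unfolding H_pairs_def incr_tuples_def ns_def ms_def by auto
  then show ?thesis by blast
qed

lemma H_nonempty_in:
  assumes "i < k" "infinite N"
  shows "\<exists>ns ms. (ns, ms) \<in> H_pairs k i N"
proof -
  obtain ns ms where "(ns, ms) \<in> H_pairs k i UNIV" using H_nonempty[OF assms(1)] by blast
  from H_map[OF strict_mono_enumerate[OF assms(2)] this assms(1)] show ?thesis
    using range_enumerate[OF assms(2)] by auto
qed

definition hp :: "nat \<Rightarrow> nat list \<Rightarrow> nat list \<times> nat list" where
  "hp i s = (take (Suc i) s @ drop (Suc (Suc i)) s, take i s @ drop (Suc i) s)"

lemma H_link: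
  assumes P: "(ns, ms) \<in> H_pairs k i N" and i: "i < k"
  shows "set ns \<union> set ms \<subseteq> N \<and> finite (set ns \<union> set ms) \<and> card (set ns \<union> set ms) = Suc k
         \<and> hp i (sorted_list_of_set (set ns \<union> set ms)) = (ns, ms)"
proof -
  have lens: "length ns = k" "length ms = k" and sn: "sorted_wrt (<) ns" and sm: "sorted_wrt (<) ms"
    and eqo: "\<And>l. l < k \<Longrightarrow> l \<noteq> i \<Longrightarrow> ns ! l = ms ! l" and lt: "ns ! i < ms ! i"
    and sub: "set ns \<subseteq> N" "set ms \<subseteq> N"
    using P unfolding H_pairs_def incr_tuples_def by auto
  define L where "L = take (Suc i) ns @ ms ! i # drop (Suc i) ns"
  have ms_eq: "ms = take i ns @ ms ! i # drop (Suc i) ns"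
  proof -
    have "ms = ns[i := ms ! i]"
    proof (rule nth_equalityI)
      show "length ms = length (ns[i := ms ! i])" using lens by simp
      fix l assume "l < length ms"
      then show "ms ! l = ns[i := ms ! i] ! l" using lens eqo by (cases "l = i") auto
    qed
    then show ?thesis using i lens by (metis upd_conv_take_nth_drop)
  qed
  have ns_eq: "ns = take i ns @ ns ! i # drop (Suc i) ns"
    using i lens by (metis id_take_nth_drop)
  have setL: "set L = set ns \<union> set ms"
  proof -
    have "set L = set (take i ns) \<union> {ns ! i} \<union> {ms ! i} \<union> set (drop (Suc i) ns)"
      unfolding L_def using i lens by (simp add: take_Suc_conv_app_nth Un_ac)
    also have "\<dots> = set ns \<union> set ms"
      using arg_cong[OF ns_eq, of set] arg_cong[OF ms_eq, of set] by auto
    finally show ?thesis .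
  qed
  have sL: "sorted_wrt (<) L"
  proof -
    have "sorted_wrt (<) (take (Suc i) ns)" using sn by (rule sorted_wrt_take)
    moreover have "sorted_wrt (<) (drop (Suc i) ns)" using sn by (rule sorted_wrt_drop)
    moreover have "\<forall>y\<in>set (drop (Suc i) ns). ms ! i < y"
    proof
      fix y assume "y \<in> set (drop (Suc i) ns)"
      then obtain l where l: "l < length (drop (Suc i) ns)" "y = drop (Suc i) ns ! l"
        by (auto simp: in_set_conv_nth)
      then have "y = ns ! (Suc i + l)" "Suc i + l < k" using lens by auto
      moreover have "ms ! i < ms ! (Suc i + l)"
        using sm \<open>Suc i + l < k\<close> lens by (simp add: sorted_wrt_iff_nth_less)
      ultimately show "ms ! i < y" using eqo by auto
    qed
    moreover have "\<forall>x\<in>set (take (Suc i) ns). \<forall>y\<in>set (ms ! i # drop (Suc i) ns). x < y"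
    proof (intro ballI)
      fix x y assume x: "x \<in> set (take (Suc i) ns)" and y: "y \<in> set (ms ! i # drop (Suc i) ns)"
      obtain l where l: "l \<le> i" "x = ns ! l"
        using x i lens by (auto simp: in_set_conv_nth less_Suc_eq_le)
      have xi: "x \<le> ns ! i" using l sn i lens
        by (metis le_eq_less_or_eq sorted_wrt_iff_nth_less)
      show "x < y"
      proof (cases "y = ms ! i")
        case True then show ?thesis using xi lt by simp
      next
        case False
        then have "y \<in> set (drop (Suc i) ns)" using y by simp
        then obtain l' where "l' < length (drop (Suc i) ns)" "y = drop (Suc i) ns ! l'"
          by (auto simp: in_set_conv_nth)
        then have "y = ns ! (Suc i + l')" "Suc i + l' < k" using lens by auto
        then have "ns ! i < y" using sn lens by (simp add: sorted_wrt_iff_nth_less)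
        then show ?thesis using xi by simp
      qed
    qed
    ultimately show ?thesis unfolding L_def sorted_wrt_append by auto
  qed
  have sls: "sorted_list_of_set (set ns \<union> set ms) = L"
    using sL setL by (metis sorted_list_of_set_sort_remdups strict_sorted_iff distinct_remdups_id sorted_sort_id)
  have lenL: "length L = Suc k" unfolding L_def using i lens by simp
  have cardL: "card (set ns \<union> set ms) = Suc k"
    using setL sL lenL by (metis distinct_card strict_sorted_iff)
  have "hp i L = (ns, ms)"
  proof -
    have d: "k \<le> Suc i \<Longrightarrow> drop (Suc i) ns = []" using lens by simp
    show ?thesis unfolding hp_def L_def using i lens d ms_eq[symmetric] by (auto simp: min_def)
  qed
  then show ?thesis using sls cardL sub by auto
qed



lemma iter_sub:
  assumes fin: "finite I" and N0: "infinite N0"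
    and ext: "\<And>a N. a \<in> I \<Longrightarrow> N \<subseteq> N0 \<Longrightarrow> infinite N \<Longrightarrow> \<exists>N'\<subseteq>N. infinite N' \<and> P a N'"
    and her: "\<And>a N N'. a \<in> I \<Longrightarrow> N' \<subseteq> N \<Longrightarrow> P a N \<Longrightarrow> P a N'"
  shows "\<exists>N'\<subseteq>N0. infinite N' \<and> (\<forall>a\<in>I. P a N')"
proof -
  have "F \<subseteq> I \<Longrightarrow> \<exists>N'\<subseteq>N0. infinite N' \<and> (\<forall>a\<in>F. P a N')" if "finite F" for F
    using that
  proof (induction F rule: finite_induct)
    case empty
    show ?case by (intro exI[of _ N0]) (simp add: N0)
  next
    case (insert a F)
    have FI: "F \<subseteq> I" and aI: "a \<in> I" using insert.prems by auto
    from insert.IH[OF FI] obtain N' where N': "N' \<subseteq> N0" "infinite N'" "\<forall>b\<in>F. P b N'"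
      by blast
    from ext[OF aI N'(1) N'(2)] obtain N'' where N'': "N'' \<subseteq> N'" "infinite N''" "P a N''"
      by blast
    have "\<forall>b\<in>F. P b N''"
    proof
      fix b assume "b \<in> F"
      then show "P b N''" using her[of b N'' N'] FI N'(3) N''(1) by auto
    qed
    then show ?case using N' N'' by (intro exI[of _ N'']) auto
  qed
  from this[OF fin] show ?thesis by simp
qed

lemma relHIC:
  fixes g :: "nat list \<Rightarrow> 'a::metric_space"
  assumes hic: "HIC lam p M dist" and img: "g ` incr_tuples k UNIV \<subseteq> M"
    and lip: "lipschitz_hamming k dist g"
    and N: "infinite N"
    and bnd: "\<And>i ns ms. i < k \<Longrightarrow> (ns, ms) \<in> H_pairs k i N \<Longrightarrow> dist (g ns) (g ms) \<le> \<beta> i"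
    and lam: "0 \<le> lam" and p: "0 < p"
  shows "\<exists>N'\<subseteq>N. infinite N' \<and> (\<forall>(ns, ms)\<in>I_pairs k N'.
            dist (g ns) (g ms) \<le> lam * (\<Sum>i<k. \<beta> i powr p) powr (1/p))"
proof -
  define h where "h = enumerate N"
  have hs: "strict_mono h" unfolding h_def using N by (rule strict_mono_enumerate)
  have rg: "range h = N" unfolding h_def using N by (rule range_enumerate)
  have inj: "inj h" using hs strict_mono_imp_inj_on by blast
  define g' where "g' = (\<lambda>ns. g (map h ns))"
  have inc: "map h ns \<in> incr_tuples k UNIV" if "ns \<in> incr_tuples k UNIV" for ns
    using map_incr[OF hs that] unfolding incr_tuples_def by auto
  have img': "g' ` incr_tuples k UNIV \<subseteq> M" using img inc unfolding g'_def by auto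
  obtain L where L: "\<forall>ns\<in>incr_tuples k UNIV. \<forall>ms\<in>incr_tuples k UNIV. dist (g ns) (g ms) \<le> L * real (hamming ns ms)"
    using lip unfolding lipschitz_hamming_def by blast
  have "lipschitz_hamming k dist g'"
    unfolding lipschitz_hamming_def
  proof (intro exI ballI)
    fix ns ms assume a: "ns \<in> incr_tuples k UNIV" "ms \<in> incr_tuples k UNIV"
    have "hamming (map h ns) (map h ms) = hamming ns ms"
      using a inj by (intro hamming_map) (auto simp: incr_tuples_def)
    then show "dist (g' ns) (g' ms) \<le> L * real (hamming ns ms)"
      using L inc a unfolding g'_def by metis
  qed
  then obtain N0 where N0: "infinite N0" and ineq: "\<forall>(ns, ms)\<in>I_pairs k N0.
      dist (g' ns) (g' ms) \<le> lam * (\<Sum>j<k. (Sup {dist (g' ns') (g' ms') | ns' ms'. (ns', ms') \<in> H_pairs k j UNIV}) powr p) powr (1/p)"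
    using hic img' unfolding HIC_def by blast
  define S where "S j = Sup {dist (g' ns') (g' ms') | ns' ms'. (ns', ms') \<in> H_pairs k j UNIV}" for j
  have Sb: "0 \<le> S j \<and> S j \<le> \<beta> j" if j: "j < k" for j
  proof -
    let ?T = "{dist (g' ns') (g' ms') | ns' ms'. (ns', ms') \<in> H_pairs k j UNIV}"
    have ub: "\<forall>x\<in>?T. x \<le> \<beta> j"
    proof
      fix x assume "x \<in> ?T"
      then obtain ns' ms' where x: "x = dist (g' ns') (g' ms')" "(ns', ms') \<in> H_pairs k j UNIV" by blast
      have "(map h ns', map h ms') \<in> H_pairs k j N" using H_map[OF hs x(2) j] rg by simp
      then show "x \<le> \<beta> j" using bnd[OF j] x(1) unfolding g'_def by auto
    qed
    obtain ns ms where nm: "(ns, ms) \<in> H_pairs k j UNIV" using H_nonempty[OF j] by blast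
    then have mem: "dist (g' ns) (g' ms) \<in> ?T" by blast
    have bdd: "bdd_above ?T" by (rule bdd_aboveI[where M="\<beta> j"]) (use ub in blast)
    have "0 \<le> S j" unfolding S_def using cSup_upper[OF mem bdd] zero_le_dist order_trans by blast
    moreover have "S j \<le> \<beta> j" unfolding S_def using mem ub by (intro cSup_least) auto
    ultimately show ?thesis by simp
  qed
  have sumle: "(\<Sum>j<k. S j powr p) \<le> (\<Sum>j<k. \<beta> j powr p)"
    using Sb p by (intro sum_mono powr_mono2) auto
  have bound: "lam * (\<Sum>j<k. S j powr p) powr (1/p) \<le> lam * (\<Sum>i<k. \<beta> i powr p) powr (1/p)"
    using sumle p lam by (intro mult_left_mono powr_mono2) (auto intro: sum_nonneg)
  show ?thesis
  proof (intro exI conjI ballI)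
    show "h ` N0 \<subseteq> N" using rg by auto
    show "infinite (h ` N0)" using N0 inj by (metis finite_imageD inj_on_subset subset_UNIV)
    fix P assume "P \<in> I_pairs k (h ` N0)"
    then obtain ns ms where P: "P = (ns, ms)" "(ns, ms) \<in> I_pairs k (h ` N0)" by (cases P) auto
    note pb = I_pullback[OF hs P(2)]
    have "dist (g ns) (g ms) = dist (g' (map (inv h) ns)) (g' (map (inv h) ms))"
      using pb unfolding g'_def by simp
    also have "\<dots> \<le> lam * (\<Sum>j<k. S j powr p) powr (1/p)"
      using ineq pb unfolding S_def by blast
    also have "\<dots> \<le> lam * (\<Sum>i<k. \<beta> i powr p) powr (1/p)" by (rule bound)
    finally show "case P of (ns, ms) \<Rightarrow> dist (g ns) (g ms) \<le> lam * (\<Sum>i<k. \<beta> i powr p) powr (1/p)"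
      using P by simp
  qed
qed

lemma ramsey_step:
  fixes D :: "nat list \<Rightarrow> nat list \<Rightarrow> real"
  assumes N: "infinite N" and eta: "\<eta> > 0" and i: "i < k"
    and bnd: "\<And>ns ms. (ns, ms) \<in> H_pairs k i UNIV \<Longrightarrow> 0 \<le> D ns ms \<and> D ns ms \<le> B"
  shows "\<exists>N'\<subseteq>N. infinite N' \<and> (\<forall>P\<in>H_pairs k i N'. \<forall>Q\<in>H_pairs k i N'. case_prod D P \<le> case_prod D Q + \<eta>)"
proof -
  define col where "col X = nat \<lfloor>min B (case_prod D (hp i (sorted_list_of_set X))) / \<eta>\<rfloor>" for X
  define s where "s = Suc (nat \<lfloor>B / \<eta>\<rfloor>)"
  have "col X < s" for X
  proof -
    have "min B (case_prod D (hp i (sorted_list_of_set X))) / \<eta> \<le> B / \<eta>"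
      using eta by (intro divide_right_mono) auto
    then have "\<lfloor>min B (case_prod D (hp i (sorted_list_of_set X))) / \<eta>\<rfloor> \<le> \<lfloor>B / \<eta>\<rfloor>" by (rule floor_mono)
    then show ?thesis unfolding col_def s_def by linarith
  qed
  then obtain Y t where Y: "Y \<subseteq> N" "infinite Y" "t < s"
    and hom: "\<forall>X. X \<subseteq> Y \<and> finite X \<and> card X = Suc k \<longrightarrow> col X = t"
    using Ramsey[OF N, of "Suc k" col s] by blast
  have colP: "nat \<lfloor>D ns ms / \<eta>\<rfloor> = t \<and> 0 \<le> D ns ms" if P: "(ns, ms) \<in> H_pairs k i Y" for ns ms
  proof -
    note lk = H_link[OF P i]
    have PU: "(ns, ms) \<in> H_pairs k i UNIV" using H_mono[of Y UNIV] P by auto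
    have "col (set ns \<union> set ms) = t" using hom lk by blast
    moreover have "col (set ns \<union> set ms) = nat \<lfloor>D ns ms / \<eta>\<rfloor>"
      unfolding col_def using lk bnd[OF PU] by simp
    ultimately show ?thesis using bnd[OF PU] by simp
  qed
  show ?thesis
  proof (intro exI conjI ballI)
    show "Y \<subseteq> N" "infinite Y" using Y by auto
    fix P Q assume P: "P \<in> H_pairs k i Y" and Q: "Q \<in> H_pairs k i Y"
    obtain a b where ab: "P = (a, b)" by (cases P)
    obtain c d where cd: "Q = (c, d)" by (cases Q)
    have 1: "nat \<lfloor>D a b / \<eta>\<rfloor> = nat \<lfloor>D c d / \<eta>\<rfloor>" "0 \<le> D a b" "0 \<le> D c d"
      using colP P Q ab cd by auto
    have "0 \<le> D a b / \<eta>" "0 \<le> D c d / \<eta>" using 1 eta by auto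
    then have f1: "0 \<le> \<lfloor>D a b / \<eta>\<rfloor>" "0 \<le> \<lfloor>D c d / \<eta>\<rfloor>" by auto
    then have "\<lfloor>D a b / \<eta>\<rfloor> = \<lfloor>D c d / \<eta>\<rfloor>" using 1(1) by (metis nat_0_le)
    then have "D a b / \<eta> < D c d / \<eta> + 1" by linarith
    then have "D a b < D c d + \<eta>" using eta by (simp add: field_simps)
    then show "case_prod D P \<le> case_prod D Q + \<eta>" using ab cd by simp
  qed
qed



theorem proposition3:
  fixes p lam :: real and e :: "nat \<Rightarrow> 'e::banach"
    and n :: nat and X :: "nat \<Rightarrow> 'a::banach set"
  assumes "1 < p" and "0 < lam"
    and "schauder_basis e" and "normalized_basis e" and "one_unconditional e"
    and "p_convex_one p e"
    and "\<forall>j<n. subspace (X j) \<and> closed (X j)"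
    and "\<forall>j<n. HIC lam p (X j) dist"
  shows "\<forall>\<epsilon>>0. HIC (lam + \<epsilon>) p (sum_space n X) (sum_dist e n)"
proof (intro allI impI)
  fix \<epsilon> :: real assume eps: "\<epsilon> > 0"
  have p: "1 < p" and lam: "0 < lam" and nb: "normalized_basis e" and unc: "one_unconditional e"
    and pc: "p_convex_one p e" and hicX: "\<forall>j<n. HIC lam p (X j) dist" using assms by auto
  show "HIC (lam + \<epsilon>) p (sum_space n X) (sum_dist e n)"
    unfolding HIC_def
  proof (intro allI impI)
    fix k and f :: "nat list \<Rightarrow> nat \<Rightarrow> 'a"
    assume fa: "f ` incr_tuples k UNIV \<subseteq> sum_space n X \<and> lipschitz_hamming k (sum_dist e n) f"
    obtain L where L: "\<forall>ns\<in>incr_tuples k UNIV. \<forall>ms\<in>incr_tuples k UNIV.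
        sum_dist e n (f ns) (f ms) \<le> L * real (hamming ns ms)"
      using fa unfolding lipschitz_hamming_def by blast
    define A where "A j = Sup {sum_dist e n (f ns') (f ms') | ns' ms'. (ns', ms') \<in> H_pairs k j UNIV}" for j
    define Dj where "Dj j ns ms = norm (f ns j - f ms j)" for j ns ms
    have sd_nn: "0 \<le> sum_dist e n x y" for x y unfolding sum_dist_def sum_norm_def by simp
    have Hinc: "ns \<in> incr_tuples k UNIV \<and> ms \<in> incr_tuples k UNIV" if "(ns, ms) \<in> H_pairs k i N" for ns ms i N
      using that unfolding H_pairs_def incr_tuples_def by auto
    have Aprop: "sum_dist e n (f ns) (f ms) \<le> A i \<and> 0 \<le> A i"
      if P: "(ns, ms) \<in> H_pairs k i UNIV" for i ns ms
    proof -
      let ?T = "{sum_dist e n (f ns') (f ms') | ns' ms'. (ns', ms') \<in> H_pairs k i UNIV}"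
      have ub: "x \<le> \<bar>L\<bar> * real k" if xT: "x \<in> ?T" for x
      proof -
        obtain ns' ms' where x: "x = sum_dist e n (f ns') (f ms')" "(ns', ms') \<in> H_pairs k i UNIV"
          using xT by blast
        note hi = Hinc[OF x(2)]
        have "hamming ns' ms' \<le> k" using hamming_le[of ns' ms'] hi unfolding incr_tuples_def by auto
        have "L * real (hamming ns' ms') \<le> \<bar>L\<bar> * real (hamming ns' ms')"
          by (intro mult_right_mono) auto
        also have "\<dots> \<le> \<bar>L\<bar> * real k" using \<open>hamming ns' ms' \<le> k\<close>
          by (intro mult_left_mono) auto
        finally have "L * real (hamming ns' ms') \<le> \<bar>L\<bar> * real k" .
        moreover have "sum_dist e n (f ns') (f ms') \<le> L * real (hamming ns' ms')" using L hi by blast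
        ultimately show ?thesis using x(1) by simp
      qed
      have mem: "sum_dist e n (f ns) (f ms) \<in> ?T" using P by blast
      have bdd: "bdd_above ?T" by (rule bdd_aboveI[where M="\<bar>L\<bar> * real k"]) (use ub in blast)
      have "sum_dist e n (f ns) (f ms) \<le> A i" unfolding A_def by (rule cSup_upper[OF mem bdd])
      moreover have "0 \<le> sum_dist e n (f ns) (f ms)" by (rule sd_nn)
      ultimately show ?thesis by linarith
    qed
    have Dj_le: "Dj j ns ms \<le> sum_dist e n (f ns) (f ms)" if "j < n" for j ns ms
      unfolding Dj_def by (rule comp_le_sum_dist[OF unc nb that])
    have Dj_nn: "0 \<le> Dj j ns ms" for j ns ms unfolding Dj_def by simp
    define \<delta> where "\<delta> = \<epsilon> / lam"
    have \<delta>: "\<delta> > 0" unfolding \<delta>_def using eps lam by simp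
    define m0 where "m0 = Min ({A i | i. i < k \<and> A i > 0} \<union> {1})"
    have finm: "finite ({A i | i. i < k \<and> A i > 0} \<union> {1})" by auto
    have m0pos: "m0 > 0" unfolding m0_def using finm by (subst Min_gr_iff) auto
    have m0le: "m0 \<le> A i" if "i < k" "A i > 0" for i
      unfolding m0_def using finm that by (intro Min_le) auto
    define \<eta> where "\<eta> = \<delta> * m0 / (real n + 1)"
    have \<eta>: "\<eta> > 0" unfolding \<eta>_def using \<delta> m0pos by simp
    have \<eta>n: "\<eta> * real n \<le> \<delta> * A i" if "i < k" "A i > 0" for i
    proof -
      have "\<eta> * real n = \<delta> * m0 * (real n / (real n + 1))" unfolding \<eta>_def by (simp add: field_simps)
      also have "\<dots> \<le> \<delta> * m0 * 1" using \<delta> m0pos by (intro mult_left_mono) auto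
      also have "\<dots> \<le> \<delta> * A i" using m0le[OF that] \<delta> by simp
      finally show ?thesis .
    qed
    \<comment> \<open>Ramsey stabilisation\<close>
    obtain N1 where N1: "infinite N1"
      and stab: "\<forall>ij\<in>{..<k} \<times> {..<n}. \<forall>P\<in>H_pairs k (fst ij) N1. \<forall>Q\<in>H_pairs k (fst ij) N1.
          case_prod (Dj (snd ij)) P \<le> case_prod (Dj (snd ij)) Q + \<eta>"
    proof -
      have "\<exists>N'\<subseteq>UNIV. infinite N' \<and> (\<forall>ij\<in>{..<k} \<times> {..<n}. \<forall>P\<in>H_pairs k (fst ij) N'. \<forall>Q\<in>H_pairs k (fst ij) N'.
          case_prod (Dj (snd ij)) P \<le> case_prod (Dj (snd ij)) Q + \<eta>)"
      proof (rule iter_sub)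
        show "finite ({..<k} \<times> {..<n})" by simp
        show "infinite (UNIV :: nat set)" by simp
        fix ij :: "nat \<times> nat" and N :: "nat set"
        assume ij: "ij \<in> {..<k} \<times> {..<n}" and "N \<subseteq> UNIV" "infinite N"
        show "\<exists>N'\<subseteq>N. infinite N' \<and> (\<forall>P\<in>H_pairs k (fst ij) N'. \<forall>Q\<in>H_pairs k (fst ij) N'.
          case_prod (Dj (snd ij)) P \<le> case_prod (Dj (snd ij)) Q + \<eta>)"
        proof (rule ramsey_step[OF \<open>infinite N\<close> \<eta>])
          show "fst ij < k" using ij by auto
          fix ns ms assume "(ns, ms) \<in> H_pairs k (fst ij) UNIV"
          then have "sum_dist e n (f ns) (f ms) \<le> A (fst ij)" using Aprop by blast
          moreover have "snd ij < n" using ij by auto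
          ultimately show "0 \<le> Dj (snd ij) ns ms \<and> Dj (snd ij) ns ms \<le> A (fst ij)"
            using Dj_le[of "snd ij" ns ms] Dj_nn by (meson order_trans)
        qed
      next
        fix ij :: "nat \<times> nat" and N N' :: "nat set"
        assume "N' \<subseteq> N" and H: "\<forall>P\<in>H_pairs k (fst ij) N. \<forall>Q\<in>H_pairs k (fst ij) N.
          case_prod (Dj (snd ij)) P \<le> case_prod (Dj (snd ij)) Q + \<eta>"
        then show "\<forall>P\<in>H_pairs k (fst ij) N'. \<forall>Q\<in>H_pairs k (fst ij) N'.
          case_prod (Dj (snd ij)) P \<le> case_prod (Dj (snd ij)) Q + \<eta>"
          using H_mono[OF \<open>N' \<subseteq> N\<close>] by blast
      qed
      then show ?thesis using that by blast
    qed
    have "\<forall>i. \<exists>Q. i < k \<longrightarrow> Q \<in> H_pairs k i N1"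
      using H_nonempty_in[OF _ N1] by blast
    from choice[OF this] obtain Q where Q0: "\<forall>i. i < k \<longrightarrow> Q i \<in> H_pairs k i N1" by blast
    have Q: "\<And>i. i < k \<Longrightarrow> Q i \<in> H_pairs k i N1" using Q0 by blast
    define \<beta> where "\<beta> i j = (if A i = 0 then 0 else Dj j (fst (Q i)) (snd (Q i)) + \<eta>)" for i j
    have \<beta>_nn: "0 \<le> \<beta> i j" for i j unfolding \<beta>_def using Dj_nn \<eta> by (simp add: add_nonneg_nonneg less_imp_le)
    have \<beta>_bnd: "Dj j ns ms \<le> \<beta> i j"
      if "i < k" "j < n" "(ns, ms) \<in> H_pairs k i N1" for i j ns ms
    proof (cases "A i = 0")
      case True
      have "(ns, ms) \<in> H_pairs k i UNIV" using H_mono[of N1 UNIV] that(3) by blast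
      then have "Dj j ns ms \<le> 0" using Aprop Dj_le[OF that(2)] True by (metis order_trans)
      then show ?thesis unfolding \<beta>_def using True by simp
    next
      case False
      have "case_prod (Dj j) (ns, ms) \<le> case_prod (Dj j) (Q i) + \<eta>"
      proof -
        have "(i, j) \<in> {..<k} \<times> {..<n}" using that by auto
        from bspec[OF stab this] have "\<forall>P\<in>H_pairs k i N1. \<forall>Q\<in>H_pairs k i N1. case_prod (Dj j) P \<le> case_prod (Dj j) Q + \<eta>"
          by simp
        then show ?thesis using that(3) Q[OF that(1)] by blast
      qed
      then show ?thesis unfolding \<beta>_def using False by (cases "Q i") auto
    qed
    \<comment> \<open>apply HIC in each coordinate\<close>
    define \<gamma> where "\<gamma> j = (\<Sum>i<k. \<beta> i j powr p) powr (1/p)" for j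
    obtain N2 where N2: "N2 \<subseteq> N1" "infinite N2"
      and comp: "\<forall>j\<in>{..<n}. \<forall>(ns, ms)\<in>I_pairs k N2. Dj j ns ms \<le> lam * \<gamma> j"
    proof -
      have "\<exists>N'\<subseteq>N1. infinite N' \<and> (\<forall>j\<in>{..<n}. \<forall>(ns, ms)\<in>I_pairs k N'. Dj j ns ms \<le> lam * \<gamma> j)"
      proof (rule iter_sub[OF _ N1])
        show "finite {..<n}" by simp
        fix j :: nat and N :: "nat set"
        assume j: "j \<in> {..<n}" and NN: "N \<subseteq> N1" "infinite N"
        have "\<exists>N'\<subseteq>N. infinite N' \<and> (\<forall>(ns, ms)\<in>I_pairs k N'.
            dist (f ns j) (f ms j) \<le> lam * (\<Sum>i<k. \<beta> i j powr p) powr (1/p))"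
        proof (rule relHIC[where g="\<lambda>ns. f ns j" and M="X j"])
          show "HIC lam p (X j) dist" using hicX j by auto
          show "(\<lambda>ns. f ns j) ` incr_tuples k UNIV \<subseteq> X j"
            using fa j unfolding sum_space_def by auto
          show "lipschitz_hamming k dist (\<lambda>ns. f ns j)"
            unfolding lipschitz_hamming_def
          proof (intro exI ballI)
            fix ns ms assume "ns \<in> incr_tuples k UNIV" "ms \<in> incr_tuples k UNIV"
            then show "dist (f ns j) (f ms j) \<le> L * real (hamming ns ms)"
            proof -
              have "sum_dist e n (f ns) (f ms) \<le> L * real (hamming ns ms)"
                using L \<open>ns \<in> incr_tuples k UNIV\<close> \<open>ms \<in> incr_tuples k UNIV\<close> by blast
              moreover have "Dj j ns ms \<le> sum_dist e n (f ns) (f ms)" using Dj_le j by simp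
              ultimately show ?thesis unfolding Dj_def dist_norm by simp
            qed
          qed
          show "infinite N" by (rule NN)
          fix i ns ms assume "i < k" "(ns, ms) \<in> H_pairs k i N"
          then show "dist (f ns j) (f ms j) \<le> \<beta> i j"
            using \<beta>_bnd[of i j ns ms] H_mono[OF NN(1)] j unfolding Dj_def dist_norm by auto
        qed (use lam p in auto)
        then show "\<exists>N'\<subseteq>N. infinite N' \<and> (\<forall>(ns, ms)\<in>I_pairs k N'. Dj j ns ms \<le> lam * \<gamma> j)"
          unfolding Dj_def \<gamma>_def dist_norm by simp
      next
        fix j :: nat and N N' :: "nat set"
        assume "N' \<subseteq> N" "\<forall>(ns, ms)\<in>I_pairs k N. Dj j ns ms \<le> lam * \<gamma> j"
        then show "\<forall>(ns, ms)\<in>I_pairs k N'. Dj j ns ms \<le> lam * \<gamma> j"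
          using I_mono[of N' N k] by blast
      qed
      then show ?thesis using that by blast
    qed
    define a where "a m j = (if j < n then \<beta> m j else 0)" for m j
    define x where "x m = (\<Sum>j<n. a m j *\<^sub>R e j)" for m
    define c where "c j = (\<Sum>m<k. \<bar>a m j\<bar> powr p) powr (1/p)" for j
    define y where "y = (\<Sum>j<n. c j *\<^sub>R e j)"
    have "norm y powr p \<le> (\<Sum>m<k. norm (x m) powr p)"
    proof -
      have "\<forall>m<k. has_coeffs e (x m) (a m)" unfolding x_def
        by (intro allI impI has_coeffs_fin) (simp add: a_def)
      moreover have "has_coeffs e y (\<lambda>j. (\<Sum>m<k. \<bar>a m j\<bar> powr p) powr (1/p))" unfolding y_def c_def
        by (rule has_coeffs_fin) (simp add: a_def)
      ultimately show ?thesis using pc[unfolded p_convex_one_def, rule_format, of k x a y] by simp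
    qed
    have y_eq: "y = (\<Sum>j<n. \<gamma> j *\<^sub>R e j)"
      unfolding y_def by (intro sum.cong) (simp_all add: c_def \<gamma>_def a_def abs_of_nonneg[OF \<beta>_nn])
    have xm: "norm (x m) \<le> (1 + \<delta>) * A m" if m: "m < k" for m
    proof (cases "A m = 0")
      case True
      then have "x m = 0" unfolding x_def a_def \<beta>_def by simp
      then show ?thesis using True by simp
    next
      case False
      obtain qn qm where q: "Q m = (qn, qm)" by (cases "Q m")
      have qH: "(qn, qm) \<in> H_pairs k m UNIV" using Q[OF m] q H_mono[of N1 UNIV] by auto
      have Apos: "A m > 0" using Aprop[OF qH] False by simp
      have "x m = (\<Sum>j<n. Dj j qn qm *\<^sub>R e j) + \<eta> *\<^sub>R (\<Sum>j<n. e j)"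
      proof -
        have "x m = (\<Sum>j<n. Dj j qn qm *\<^sub>R e j + \<eta> *\<^sub>R e j)"
          unfolding x_def a_def \<beta>_def using False q by (intro sum.cong) (auto simp: scaleR_add_left)
        also have "\<dots> = (\<Sum>j<n. Dj j qn qm *\<^sub>R e j) + (\<Sum>j<n. \<eta> *\<^sub>R e j)"
          by (rule sum.distrib)
        also have "(\<Sum>j<n. \<eta> *\<^sub>R e j) = \<eta> *\<^sub>R (\<Sum>j<n. e j)"
          by (rule scaleR_sum_right[symmetric])
        finally show ?thesis .
      qed
      then have t1: "norm (x m) \<le> norm (\<Sum>j<n. Dj j qn qm *\<^sub>R e j) + norm (\<eta> *\<^sub>R (\<Sum>j<n. e j))"
        using norm_triangle_ineq[of "\<Sum>j<n. Dj j qn qm *\<^sub>R e j" "\<eta> *\<^sub>R (\<Sum>j<n. e j)"] by simp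
      have t2: "norm (\<eta> *\<^sub>R (\<Sum>j<n. e j)) = \<eta> * norm (\<Sum>j<n. e j)"
        using \<eta> by simp
      have t3: "norm (\<Sum>j<n. Dj j qn qm *\<^sub>R e j) = sum_dist e n (f qn) (f qm)"
        unfolding sum_dist_def sum_norm_def Dj_def by simp
      have t4: "sum_dist e n (f qn) (f qm) \<le> A m" using Aprop[OF qH] by simp
      have t5: "\<eta> * norm (\<Sum>j<n. e j) \<le> \<eta> * real n"
        using norm_sum_e_le[OF nb] \<eta> by (intro mult_left_mono) auto
      have t6: "\<eta> * real n \<le> \<delta> * A m" using \<eta>n[OF m Apos] .
      have "norm (x m) \<le> A m + \<delta> * A m" using t1 t2 t3 t4 t5 t6 by linarith
      then show ?thesis by (simp add: algebra_simps)
    qed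
    have A_nn: "0 \<le> A i" if ik: "i < k" for i
    proof -
      obtain ns ms where "(ns, ms) \<in> H_pairs k i UNIV" using H_nonempty[OF ik] by blast
      then show ?thesis using Aprop by blast
    qed
    define S where "S = (\<Sum>i<k. A i powr p)"
    have S_nn: "0 \<le> S" unfolding S_def by (simp add: sum_nonneg)
    have ny: "norm y \<le> (1 + \<delta>) * S powr (1/p)"
    proof -
      have "norm y powr p \<le> (\<Sum>m<k. norm (x m) powr p)" by fact
      also have "\<dots> \<le> (\<Sum>m<k. ((1 + \<delta>) * A m) powr p)"
        using xm p by (intro sum_mono powr_mono2) auto
      also have "\<dots> = (1 + \<delta>) powr p * S"
        unfolding S_def sum_distrib_left using \<delta> A_nn by (intro sum.cong) (auto simp: powr_mult)
      finally have le: "norm y powr p \<le> (1 + \<delta>) powr p * S" .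
      have "norm y = (norm y powr p) powr (1/p)" using p by (simp add: powr_powr)
      also have "\<dots> \<le> ((1 + \<delta>) powr p * S) powr (1/p)"
        using le p by (intro powr_mono2) auto
      also have "\<dots> = (1 + \<delta>) * S powr (1/p)"
        using \<delta> S_nn p by (simp add: powr_mult powr_powr)
      finally show ?thesis .
    qed
    have final: "\<forall>(ns, ms)\<in>I_pairs k N2. sum_dist e n (f ns) (f ms) \<le> (lam + \<epsilon>) * S powr (1/p)"
    proof (intro ballI, clarify)
      fix ns ms assume P: "(ns, ms) \<in> I_pairs k N2"
      have "sum_dist e n (f ns) (f ms) = norm (\<Sum>j<n. Dj j ns ms *\<^sub>R e j)"
        unfolding sum_dist_def sum_norm_def Dj_def by simp
      also have "\<dots> \<le> norm (\<Sum>j<n. (lam * \<gamma> j) *\<^sub>R e j)"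
        using comp P Dj_nn by (intro uncond_mono[OF unc]) auto
      also have "\<dots> = lam * norm y"
      proof -
        have "(\<Sum>j<n. (lam * \<gamma> j) *\<^sub>R e j) = lam *\<^sub>R (\<Sum>j<n. \<gamma> j *\<^sub>R e j)"
          by (simp add: scaleR_sum_right)
        then show ?thesis unfolding y_eq using lam by simp
      qed
      also have "\<dots> \<le> lam * ((1 + \<delta>) * S powr (1/p))"
        using ny lam by (intro mult_left_mono) auto
      also have "\<dots> = (lam + \<epsilon>) * S powr (1/p)"
        unfolding \<delta>_def using lam by (simp add: field_simps)
      finally show "sum_dist e n (f ns) (f ms) \<le> (lam + \<epsilon>) * S powr (1/p)" .
    qed
    show "\<exists>N. infinite N \<and> (\<forall>(ns, ms)\<in>I_pairs k N. sum_dist e n (f ns) (f ms) \<le> (lam + \<epsilon>) *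
        (\<Sum>j<k. (Sup {sum_dist e n (f ns') (f ms') | ns' ms'. (ns', ms') \<in> H_pairs k j UNIV}) powr p) powr (1/p))"
    proof (rule exI[of _ N2], rule conjI)
      show "infinite N2" by (rule N2(2))
      show "\<forall>(ns, ms)\<in>I_pairs k N2. sum_dist e n (f ns) (f ms) \<le> (lam + \<epsilon>) *
        (\<Sum>j<k. (Sup {sum_dist e n (f ns') (f ms') | ns' ms'. (ns', ms') \<in> H_pairs k j UNIV}) powr p) powr (1/p)"
        using final unfolding S_def A_def .
    qed
  qed
qed

end
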